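(* Let $(x_n)_{n\ge0}$ be an infinite path in $\Gamma$ with $\ell(x_n)=n$, let $z$ be nonreal, and let $v_z,u_z:\Gamma\to\mathbb C$ satisfy $v_z(x_0)=1$, $v_z(x_1)=(z-\beta_{x_0})/\lambda_{x_0}$, $u_z(x_0)=0$, $u_z(x_1)=1/\lambda_{x_0}$, and $(Jv_z)(x)=zv_z(x)$, $(Ju_z)(x)=zu_z(x)$ for all $x\in\Gamma\setminus\{x_0\}$. Then for every $n\ge1$ and every $x\in\Gamma_n$, $v_z(x_n)u_z(x)=u_z(x_n)v_z(x)$.
   Context: Let $\Gamma$ be an infinite connected tree whose vertices are arranged in levels $\ell(x)\in\{0,1,2,\dots\}$: every vertex $x$ is adjacent to exactly one vertex $x'$ with $\ell(x')=\ell(x)+1$; for $\ell(x)\ge 1$ the set $N_x=\{y:\ y'=x\}$ of neighbours of $x$ on level $\ell(x)-1$ is finite and nonempty; $N_x=\emptyset$ if $\ell(x)=0$; there are no other edges. Fix $\lambda_x>0$, $\beta_x\in\mathbb R$. The Jacobi matrix $J$ acts on functions $v:\Gamma\to\mathbb C$ by $(Jv)(x)=\lambda_x v(x')+\beta_x v(x)+\sum_{y\in N_x}\lambda_y v(y)$. Given the path $(x_n)$, $\Gamma_n$ denotes the connected component containing $x_n$ of the graph obtained from $\Gamma$ by deleting all edges $\{x_n,x_{n+1}\}$, $n\ge0$ (no vertices are deleted); $\Gamma_n$ is finite and $x_n$ is its only vertex on level $n$. *)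

theory Defs
  imports Complex_Main
begin

text \<open>The tree \<Gamma> has vertex set the type 'a.  lev x is the level, and par x = x' is
  the unique neighbour of x on level lev x + 1.\<close>

definition children :: "('a \<Rightarrow> 'a) \<Rightarrow> 'a \<Rightarrow> 'a set" where
  "children par x = {y. par y = x}"

definition adj :: "('a \<Rightarrow> 'a) \<Rightarrow> 'a \<Rightarrow> 'a \<Rightarrow> bool" where
  "adj par x y \<longleftrightarrow> y = par x \<or> x = par y"

definition level_tree :: "('a \<Rightarrow> nat) \<Rightarrow> ('a \<Rightarrow> 'a) \<Rightarrow> bool" where
  "level_tree lev par \<longleftrightarrow>
     infinite (UNIV :: 'a set) \<and>
     (\<forall>x. lev (par x) = lev x + 1) \<and>
     (\<forall>x. lev x \<ge> 1 \<longrightarrow> finite (children par x) \<and> children par x \<noteq> {}) \<and>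
     (\<forall>x. lev x = 0 \<longrightarrow> children par x = {}) \<and>
     (\<forall>x y. (adj par)\<^sup>*\<^sup>* x y)"

definition jacobi :: "('a \<Rightarrow> 'a) \<Rightarrow> ('a \<Rightarrow> real) \<Rightarrow> ('a \<Rightarrow> real) \<Rightarrow> ('a \<Rightarrow> complex) \<Rightarrow> 'a \<Rightarrow> complex" where
  "jacobi par lam beta v x =
     of_real (lam x) * v (par x) + of_real (beta x) * v x
     + (\<Sum>y\<in>children par x. of_real (lam y) * v y)"

definition cut_adj :: "('a \<Rightarrow> 'a) \<Rightarrow> (nat \<Rightarrow> 'a) \<Rightarrow> 'a \<Rightarrow> 'a \<Rightarrow> bool" where
  "cut_adj par xs x y \<longleftrightarrow> adj par x y \<and> \<not> (\<exists>k. {x, y} = {xs k, xs (Suc k)})"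

definition Gamma_n :: "('a \<Rightarrow> 'a) \<Rightarrow> (nat \<Rightarrow> 'a) \<Rightarrow> nat \<Rightarrow> 'a set" where
  "Gamma_n par xs n = {y. (cut_adj par xs)\<^sup>*\<^sup>* (xs n) y}"

end

theory Submission
  imports Defs
begin

lemma key:
  fixes S :: "'a set" and w :: "'a \<Rightarrow> complex" and par :: "'a \<Rightarrow> 'a"
    and lam beta :: "'a \<Rightarrow> real"
  assumes fin: "finite S" and ch: "\<And>x y. x \<in> S \<Longrightarrow> par y = x \<Longrightarrow> y \<in> S"
    and pc: "\<And>x. x \<in> S \<Longrightarrow> par x \<notin> S \<Longrightarrow> w (par x) = 0"
    and eq: "\<And>x. x \<in> S \<Longrightarrow> jacobi par lam beta w x = z * w x"
    and nz: "Im z \<noteq> 0"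
    and xS: "x \<in> S"
  shows "w x = 0"
proof -
  define P where "P = {y\<in>S. par y \<in> S}"
  define B where "B = (\<Sum>x\<in>P. cnj (w x) * (of_real (lam x) * w (par x)))"
  have finP: "finite P" using fin unfolding P_def by auto
  have chS: "children par x = {y\<in>S. par y = x}" if "x\<in>S" for x
    using ch that unfolding children_def by auto
  have s1: "(\<Sum>x\<in>S. cnj (w x) * (of_real (lam x) * w (par x))) = B"
    unfolding B_def
    by (rule sum.mono_neutral_cong_right) (use fin pc in \<open>auto simp: P_def\<close>)
  have s3: "(\<Sum>x\<in>S. cnj (w x) * (\<Sum>y\<in>children par x. of_real (lam y) * w y)) = cnj B"
  proof -
    have "(\<Sum>x\<in>S. cnj (w x) * (\<Sum>y\<in>children par x. of_real (lam y) * w y))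
        = (\<Sum>x\<in>S. \<Sum>y\<in>{y\<in>S. par y = x}. cnj (w x) * (of_real (lam y) * w y))"
      by (rule sum.cong) (simp_all add: chS sum_distrib_left)
    also have "\<dots> = (\<Sum>y\<in>S. \<Sum>x\<in>{x\<in>S. par y = x}. cnj (w x) * (of_real (lam y) * w y))"
      by (rule sum.swap_restrict) (use fin in auto)
    also have "\<dots> = (\<Sum>y\<in>S. if par y \<in> S then cnj (w (par y)) * (of_real (lam y) * w y) else 0)"
    proof (rule sum.cong)
      fix y assume "y \<in> S"
      have "{x\<in>S. par y = x} = (if par y \<in> S then {par y} else {})" by auto
      then show "(\<Sum>x\<in>{x\<in>S. par y = x}. cnj (w x) * (of_real (lam y) * w y)) =
        (if par y \<in> S then cnj (w (par y)) * (of_real (lam y) * w y) else 0)" by simp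
    qed simp
    also have "\<dots> = (\<Sum>y\<in>P. cnj (w (par y)) * (of_real (lam y) * w y))"
      unfolding P_def using fin by (simp add: sum.inter_filter)
    also have "\<dots> = cnj B" unfolding B_def cnj_sum
      by (rule sum.cong) (simp_all add: mult_ac)
    finally show ?thesis .
  qed
  have s2: "(\<Sum>x\<in>S. cnj (w x) * (of_real (beta x) * w x)) = of_real (\<Sum>x\<in>S. beta x * (cmod (w x))^2)"
    unfolding of_real_sum by (rule sum.cong) (simp_all add: complex_norm_square[symmetric] mult_ac)
  have "(\<Sum>x\<in>S. cnj (w x) * jacobi par lam beta w x)
      = (\<Sum>x\<in>S. cnj (w x) * (of_real (lam x) * w (par x))) + (\<Sum>x\<in>S. cnj (w x) * (of_real (beta x) * w x))
        + (\<Sum>x\<in>S. cnj (w x) * (\<Sum>y\<in>children par x. of_real (lam y) * w y))"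
    unfolding jacobi_def by (simp add: distrib_left sum.distrib)
  also have "\<dots> = B + cnj B + of_real (\<Sum>x\<in>S. beta x * (cmod (w x))^2)"
    using s1 s2 s3 by simp
  finally have A1: "(\<Sum>x\<in>S. cnj (w x) * jacobi par lam beta w x) = B + cnj B + of_real (\<Sum>x\<in>S. beta x * (cmod (w x))^2)" .
  have A2: "(\<Sum>x\<in>S. cnj (w x) * jacobi par lam beta w x) = z * of_real (\<Sum>x\<in>S. (cmod (w x))^2)"
    unfolding sum_distrib_left of_real_sum
    by (rule sum.cong) (simp_all add: eq complex_norm_square[symmetric] mult_ac)
  have "Im (z * of_real (\<Sum>x\<in>S. (cmod (w x))^2)) = 0"
    using A1 A2 by simp
  then have "(\<Sum>x\<in>S. (cmod (w x))^2) = 0" using nz by simp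
  then have "(cmod (w x))^2 = 0" using fin xS by (simp add: sum_nonneg_eq_0_iff)
  then show ?thesis by simp
qed


lemma fin_desc:
  assumes chf: "\<And>c. finite (children par c)"
  shows "finite {x. (par ^^ k) x = y}"
proof (induction k arbitrary: y)
  case 0 then show ?case by simp
next
  case (Suc k)
  have "{x. (par ^^ Suc k) x = y} = (\<Union>c\<in>{c. (par ^^ k) c = y}. children par c)"
    by (auto simp: children_def funpow_Suc_right simp del: funpow.simps)
  then show ?case using Suc chf by simp
qed

theorem lemma7:
  fixes lev :: "'a \<Rightarrow> nat" and par :: "'a \<Rightarrow> 'a"
    and lam beta :: "'a \<Rightarrow> real" and xs :: "nat \<Rightarrow> 'a"
    and z :: complex and v u :: "'a \<Rightarrow> complex"
  assumes tree: "level_tree lev par"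
    and lam_pos: "\<forall>x. lam x > 0"
    and path_lev: "\<forall>n. lev (xs n) = n"
    and path_adj: "\<forall>n. adj par (xs n) (xs (Suc n))"
    and nonreal: "Im z \<noteq> 0"
    and v0: "v (xs 0) = 1"
    and v1: "v (xs 1) = (z - of_real (beta (xs 0))) / of_real (lam (xs 0))"
    and u0: "u (xs 0) = 0"
    and u1: "u (xs 1) = 1 / of_real (lam (xs 0))"
    and Jv: "\<forall>x. x \<noteq> xs 0 \<longrightarrow> jacobi par lam beta v x = z * v x"
    and Ju: "\<forall>x. x \<noteq> xs 0 \<longrightarrow> jacobi par lam beta u x = z * u x"
  shows "\<forall>n\<ge>1. \<forall>x\<in>Gamma_n par xs n. v (xs n) * u x = u (xs n) * v x"
proof (intro allI impI ballI)
  fix n x assume n1: "n \<ge> 1" and xG: "x \<in> Gamma_n par xs n"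
  have levp: "\<And>x. lev (par x) = lev x + 1" using tree unfolding level_tree_def by auto
  have chf: "\<And>c. finite (children par c)" using tree unfolding level_tree_def
    by (metis finite.emptyI less_one not_le)
  have parxs: "par (xs k) = xs (Suc k)" for k
  proof -
    have "xs (Suc k) = par (xs k) \<or> xs k = par (xs (Suc k))" using path_adj unfolding adj_def by blast
    moreover have "xs k \<noteq> par (xs (Suc k))"
    proof
      assume "xs k = par (xs (Suc k))"
      then have "lev (xs k) = lev (xs (Suc k)) + 1" using levp by simp
      then show False using path_lev by simp
    qed
    ultimately show ?thesis by simp
  qed
  have powxs: "(par ^^ k) (xs m) = xs (m + k)" for k m
    by (induction k) (simp_all add: parxs)
  have levpow: "lev ((par ^^ k) y) = lev y + k" for k y
    by (induction k) (simp_all add: levp)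
  define S where "S = {y. lev y < n \<and> (par ^^ (n - lev y)) y = xs n \<and> (par ^^ (n - 1 - lev y)) y \<noteq> xs (n - 1)}"
  define w where "w = (\<lambda>y. v (xs n) * u y - u (xs n) * v y)"
  have ch: "y \<in> S" if "x' \<in> S" "par y = x'" for x' y
  proof -
    have l: "lev x' = lev y + 1" using that levp by auto
    have a: "n - lev y = Suc (n - lev x')" "n - 1 - lev y = Suc (n - 1 - lev x')"
      using that l unfolding S_def by auto
    show ?thesis using that l unfolding S_def
      by (simp only: a funpow_Suc_right o_apply mem_Collect_eq) auto
  qed
  have up: "par y \<in> S \<or> par y = xs n" if "y \<in> S" for y
  proof (cases "lev y + 1 < n")
    case True
    have a: "n - lev y = Suc (n - lev (par y))" "n - 1 - lev y = Suc (n - 1 - lev (par y))"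
      using True levp by auto
    show ?thesis using that True levp unfolding S_def
      by (simp only: a funpow_Suc_right o_apply mem_Collect_eq) auto
  next
    case False
    then have "n - lev y = 1" using that unfolding S_def by auto
    then show ?thesis using that unfolding S_def by auto
  qed
  have notx0: "y \<noteq> xs 0" if "y \<in> S" for y
  proof
    assume "y = xs 0"
    then show False using that path_lev powxs[of "n - 1" 0] unfolding S_def by auto
  qed
  have finS: "finite S"
  proof (rule finite_subset)
    show "S \<subseteq> (\<Union>k\<in>{..n}. {y. (par ^^ k) y = xs n})" unfolding S_def
      by (auto intro!: bexI[where x="n - lev _" for n])
    show "finite (\<Union>k\<in>{..n}. {y. (par ^^ k) y = xs n})" using fin_desc[OF chf] by simp
  qed
  have wn: "w (xs n) = 0" unfolding w_def by simp
  have eqw: "jacobi par lam beta w y = z * w y" if "y \<in> S" for y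
  proof -
    have "jacobi par lam beta w y = v (xs n) * jacobi par lam beta u y - u (xs n) * jacobi par lam beta v y"
      unfolding jacobi_def w_def by (simp add: algebra_simps sum_subtractf sum_distrib_left)
    then show ?thesis using Jv Ju notx0[OF that] unfolding w_def by (simp add: algebra_simps)
  qed
  have wS: "w y = 0" if "y \<in> S" for y
  proof (rule key[where S=S and par=par and lam=lam and beta=beta and z=z])
    show "finite S" by (rule finS)
    show "\<And>x y. x \<in> S \<Longrightarrow> par y = x \<Longrightarrow> y \<in> S" by (rule ch)
    show "\<And>x. x \<in> S \<Longrightarrow> par x \<notin> S \<Longrightarrow> w (par x) = 0" using up wn by metis
    show "\<And>x. x \<in> S \<Longrightarrow> jacobi par lam beta w x = z * w x" by (rule eqw)
  qed (use nonreal that in auto)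
  have GS: "y \<in> insert (xs n) S" if "(cut_adj par xs)\<^sup>*\<^sup>* (xs n) y" for y
    using that
  proof (induction rule: rtranclp_induct)
    case base then show ?case by simp
  next
    case (step y y')
    from step.hyps(2) have ad: "y' = par y \<or> y = par y'" and nc: "\<not> (\<exists>k. {y, y'} = {xs k, xs (Suc k)})"
      unfolding cut_adj_def adj_def by auto
    show ?case
    proof (cases "y = xs n")
      case True
      show ?thesis
      proof (cases "y' = par y")
        case True
        then have "{y, y'} = {xs n, xs (Suc n)}" using \<open>y = xs n\<close> parxs by simp
        then show ?thesis using nc by blast
      next
        case False
        then have py: "par y' = xs n" using ad True by auto
        then have ly: "lev y' + 1 = n" using levp path_lev by metis
        have "y' \<noteq> xs (n - 1)"
        proof
          assume "y' = xs (n - 1)"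
          moreover have "Suc (n - 1) = n" using n1 by simp
          ultimately have "{y, y'} = {xs (n - 1), xs (Suc (n - 1))}" using True by (simp add: insert_commute)
          then show False using nc by blast
        qed
        moreover have "n - lev y' = 1" "n - 1 - lev y' = 0" using ly by auto
        ultimately show ?thesis using ly py unfolding S_def by auto
      qed
    next
      case False
      then have yS: "y \<in> S" using step.IH by auto
      show ?thesis
      proof (cases "y' = par y")
        case True then show ?thesis using up[OF yS] by blast
      next
        case False then have "par y' = y" using ad by simp
        then show ?thesis using ch[OF yS] by simp
      qed
    qed
  qed
  show "v (xs n) * u x = u (xs n) * v x"
  proof (cases "x = xs n")
    case True then show ?thesis by simp
  next
    case False
    then have "x \<in> S" using GS xG unfolding Gamma_n_def by auto
    then show ?thesis using wS unfolding w_def by simp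
  qed
qed

end
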